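(* Let $P\ge1$, $\nu>0$, $\mathbf{g}\in\mathbb{R}^P$, and let $\mathbf{v}\in\mathbb{R}^P$ have i.i.d. entries $v[p]\sim\mathcal{N}(0,\nu^2)$. Let $\theta_0=\|\mathbf{g}\|^2/(P\nu^2)$ and suppose $0\le\theta_{\min}\le\theta_0\le\theta_{\max}$. Then for any $\tau_1\ge\nu^2(1+\theta_{\max})$ and any $\tau_2\le\nu^2(1+\theta_{\min})$, $$\mathbb{P}\Big[\tfrac1P\|\mathbf{g}+\mathbf{v}\|^2\ge\tau_1\Big]\le\exp\Big(-\tfrac P4\big(\sqrt{2\tau_1/\nu^2-1}-\sqrt{1+2\theta_{\max}}\big)^2\Big),$$ $$\mathbb{P}\Big[\tfrac1P\|\mathbf{g}+\mathbf{v}\|^2\le\tau_2\Big]\le\exp\Big(-\tfrac P4\,\frac{(1+\theta_{\min}-\tau_2/\nu^2)^2}{1+2\theta_{\min}}\Big).$$ *)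

theory Defs
  imports "HOL-Probability.Probability"
begin

end

theory Submission
  imports Defs
begin


lemma gauss_pointwise:
  fixes \<nu> s g x :: real
  assumes "\<nu> > 0" "1 - 2 * s * \<nu>\<^sup>2 > 0"
  shows "normal_density 0 \<nu> x  *  exp (s * (g+x)\<^sup>2) =
    exp (s * g\<^sup>2/(1 - 2 * s * \<nu>\<^sup>2)) / sqrt (1 - 2 * s * \<nu>\<^sup>2)  * 
    normal_density (2 * s * g * \<nu>\<^sup>2/(1 - 2 * s * \<nu>\<^sup>2)) (\<nu> / sqrt (1 - 2 * s * \<nu>\<^sup>2)) x"
proof -
  define k where "k = 1 - 2 * s * \<nu>\<^sup>2"
  have k: "k > 0" using assms k_def by simp
  have sq: "(\<nu> / sqrt k)\<^sup>2 = \<nu>\<^sup>2 / k" using k by (simp add: power_divide)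
  have poly: "2 * \<nu>\<^sup>2 * k * (s * (g+x)\<^sup>2) - k * x\<^sup>2 = 2 * \<nu>\<^sup>2 * (s * g\<^sup>2) - (k * x - 2 * s * g * \<nu>\<^sup>2)\<^sup>2"
    unfolding k_def power2_eq_square by algebra
  have e: "s * (g+x)\<^sup>2 + (-(x-0)\<^sup>2/(2 * \<nu>\<^sup>2)) = s * g\<^sup>2/k + (-(x - 2 * s * g * \<nu>\<^sup>2/k)\<^sup>2/(2 * (\<nu>\<^sup>2/k)))"
  proof -
    have "(x - 2 * s * g * \<nu>\<^sup>2/k)\<^sup>2 = (k * x - 2 * s * g * \<nu>\<^sup>2)\<^sup>2 / k\<^sup>2"
      using k by (simp add: field_simps)
    then show ?thesis using k assms poly apply (simp add: field_simps power2_eq_square) by algebra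
  qed
  have c: "1 / sqrt (2 * pi * \<nu>\<^sup>2) = 1 / sqrt k  *  (1 / sqrt (2 * pi * (\<nu>\<^sup>2/k)))"
    using k by (simp add: real_sqrt_divide real_sqrt_mult)
  have E: "exp (s * (g+x)\<^sup>2) * exp (-(x-0)\<^sup>2/(2 * \<nu>\<^sup>2)) = exp (s * g\<^sup>2/k) * exp (-(x - 2 * s * g * \<nu>\<^sup>2/k)\<^sup>2/(2 * (\<nu>\<^sup>2/k)))"
    by (simp only: exp_add[symmetric] e)
  have "normal_density 0 \<nu> x * exp (s * (g+x)\<^sup>2) = 1 / sqrt (2*pi*\<nu>\<^sup>2) * (exp (s * (g+x)\<^sup>2) * exp (-(x-0)\<^sup>2/(2 * \<nu>\<^sup>2)))"
    unfolding normal_density_def by (simp add: ac_simps)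
  also have "\<dots> = exp (s * g\<^sup>2/k) / sqrt k * (1 / sqrt (2*pi*(\<nu>\<^sup>2/k)) * exp (-(x - 2 * s * g * \<nu>\<^sup>2/k)\<^sup>2/(2 * (\<nu>\<^sup>2/k))))"
    unfolding E c by (simp add: ac_simps)
  finally show ?thesis unfolding normal_density_def k_def[symmetric] sq .
qed


lemma gauss_mgf:
  fixes X :: "'a \<Rightarrow> real"
  assumes D: "distributed M lborel X (normal_density 0 \<nu>)" and "\<nu> > 0" "1 - 2 * s * \<nu>\<^sup>2 > 0"
  shows "integrable M (\<lambda>\<omega>. exp (s * (g + X \<omega>)\<^sup>2))"
    and "integral\<^sup>L M (\<lambda>\<omega>. exp (s * (g + X \<omega>)\<^sup>2)) = exp (s * g\<^sup>2/(1 - 2 * s * \<nu>\<^sup>2)) / sqrt (1 - 2 * s * \<nu>\<^sup>2)"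
proof -
  have m: "(\<lambda>x. exp (s * (g + x)\<^sup>2)) \<in> borel_measurable lborel" by measurable
  have pw: "\<And>x. normal_density 0 \<nu> x * exp (s * (g+x)\<^sup>2) =
    exp (s * g\<^sup>2/(1 - 2 * s * \<nu>\<^sup>2)) / sqrt (1 - 2 * s * \<nu>\<^sup>2) *
    normal_density (2 * s * g * \<nu>\<^sup>2/(1 - 2 * s * \<nu>\<^sup>2)) (\<nu> / sqrt (1 - 2 * s * \<nu>\<^sup>2)) x"
    using gauss_pointwise assms by blast
  have "integrable lborel (\<lambda>x. normal_density 0 \<nu> x * exp (s * (g+x)\<^sup>2))"
    unfolding pw using assms by (intro integrable_divide integrable_mult_right integrable_normal_density) auto
  then show "integrable M (\<lambda>\<omega>. exp (s * (g + X \<omega>)\<^sup>2))"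
    using distributed_integrable[OF D m] by simp
  have "integral\<^sup>L M (\<lambda>\<omega>. exp (s * (g + X \<omega>)\<^sup>2)) = (\<integral>x. normal_density 0 \<nu> x * exp (s * (g+x)\<^sup>2) \<partial>lborel)"
    using distributed_integral[OF D m] by simp
  also have "\<dots> = exp (s * g\<^sup>2/(1 - 2 * s * \<nu>\<^sup>2)) / sqrt (1 - 2 * s * \<nu>\<^sup>2)"
    unfolding pw using assms by (simp add: integral_normal_density)
  finally show "integral\<^sup>L M (\<lambda>\<omega>. exp (s * (g + X \<omega>)\<^sup>2)) = exp (s * g\<^sup>2/(1 - 2 * s * \<nu>\<^sup>2)) / sqrt (1 - 2 * s * \<nu>\<^sup>2)" .
qed



lemma ln_upper_aux:
  fixes r :: real assumes "1 \<le> r" shows "ln r \<le> (r - 1/r)/2"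
proof -
  let ?f = "\<lambda>t::real. (t - 1/t)/2 - ln t"
  have "?f 1 \<le> ?f r"
  proof (rule DERIV_nonneg_imp_nondecreasing[OF assms])
    fix x :: real assume x: "1 \<le> x" "x \<le> r"
    have "DERIV ?f x :> ((1 + 1/x\<^sup>2)/2 - 1/x)"
      using x by (auto intro!: derivative_eq_intros simp: field_simps power2_eq_square)
    moreover have "(1 + 1/x\<^sup>2)/2 - 1/x = (1 - 1/x)\<^sup>2/2"
      using x by (simp add: field_simps power2_eq_square)
    ultimately show "\<exists>y. DERIV ?f x :> y \<and> y \<ge> 0" by auto
  qed
  then show ?thesis by simp
qed

lemma ln_lower_aux:
  fixes x :: real assumes "0 \<le> x" shows "x - x\<^sup>2/2 \<le> ln (1 + x)"
proof -
  let ?f = "\<lambda>t::real. ln (1 + t) - t + t\<^sup>2/2"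
  have "?f 0 \<le> ?f x"
  proof (rule DERIV_nonneg_imp_nondecreasing[OF assms])
    fix y :: real assume y: "0 \<le> y" "y \<le> x"
    have "DERIV ?f y :> (1/(1+y) - 1 + y)"
      using y by (auto intro!: derivative_eq_intros simp: field_simps power2_eq_square)
    moreover have "1/(1+y) - 1 + y = y\<^sup>2/(1+y)"
      using y by (simp add: field_simps power2_eq_square)
    ultimately show "\<exists>z. DERIV ?f y :> z \<and> z \<ge> 0" using y by auto
  qed
  then show ?thesis by simp
qed



lemma markov_exp:
  fixes f :: "'a \<Rightarrow> real"
  assumes "prob_space M" "A \<in> sets M" "integrable M (\<lambda>x. exp (f x))" "\<And>x. x \<in> A \<Longrightarrow> 0 \<le> f x"
  shows "measure M A \<le> integral\<^sup>L M (\<lambda>x. exp (f x))"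
proof -
  interpret prob_space M by fact
  have "measure M A = integral\<^sup>L M (indicator A)"
    using assms by (simp add: integral_indicator)
  also have "\<dots> \<le> integral\<^sup>L M (\<lambda>x. exp (f x))"
  proof (rule integral_mono)
    have "integrable M (\<lambda>x. indicator A x *\<^sub>R (1::real))"
      by (rule integrable_indicator) (use assms in \<open>auto simp: emeasure_eq_measure\<close>)
    then show "integrable M (indicator A :: 'a \<Rightarrow> real)" by simp
    show "integrable M (\<lambda>x. exp (f x))" by fact
    fix x show "(indicator A x :: real) \<le> exp (f x)"
      using assms(4)[of x] by (cases "x \<in> A") auto
  qed
  finally show ?thesis .
qed

lemma mgf_sum:
  fixes M :: "'a measure" and v :: "'a \<Rightarrow> nat \<Rightarrow> real" and g :: "nat \<Rightarrow> real"
  assumes "prob_space M"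
    and ind: "prob_space.indep_vars M (\<lambda>_. borel) (\<lambda>p x. v x p) {..<P}"
    and D: "\<And>p. p < P \<Longrightarrow> distributed M lborel (\<lambda>x. v x p) (normal_density 0 \<nu>)"
    and "\<nu> > 0" "1 - 2 * s * \<nu>\<^sup>2 > 0"
  shows "integrable M (\<lambda>x. exp (s * (\<Sum>p<P. (g p + v x p)\<^sup>2)))"
    and "integral\<^sup>L M (\<lambda>x. exp (s * (\<Sum>p<P. (g p + v x p)\<^sup>2))) =
         exp (s * (\<Sum>p<P. (g p)\<^sup>2) / (1 - 2 * s * \<nu>\<^sup>2)) / sqrt (1 - 2 * s * \<nu>\<^sup>2) ^ P"
proof -
  interpret prob_space M by fact
  have eq: "(\<lambda>x. exp (s * (\<Sum>p<P. (g p + v x p)\<^sup>2))) = (\<lambda>x. \<Prod>p<P. exp (s * (g p + v x p)\<^sup>2))"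
    by (simp add: sum_distrib_left exp_sum)
  have ind2: "indep_vars (\<lambda>_. borel) (\<lambda>p x. exp (s * (g p + v x p)\<^sup>2)) {..<P}"
    using indep_vars_compose2[OF ind, where Y="\<lambda>p t. exp (s * (g p + t)\<^sup>2)" and N="\<lambda>_. borel"]
    by simp
  have int: "\<And>p. p \<in> {..<P} \<Longrightarrow> integrable M (\<lambda>x. exp (s * (g p + v x p)\<^sup>2))"
    using gauss_mgf(1)[OF D] assms by auto
  show "integrable M (\<lambda>x. exp (s * (\<Sum>p<P. (g p + v x p)\<^sup>2)))"
    unfolding eq by (rule indep_vars_integrable[OF _ ind2 int]) auto
  have "integral\<^sup>L M (\<lambda>x. exp (s * (\<Sum>p<P. (g p + v x p)\<^sup>2))) =
     (\<Prod>p<P. integral\<^sup>L M (\<lambda>x. exp (s * (g p + v x p)\<^sup>2)))"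
    unfolding eq by (rule indep_vars_lebesgue_integral[OF _ ind2 int]) auto
  also have "\<dots> = (\<Prod>p<P. exp (s * (g p)\<^sup>2/(1 - 2 * s * \<nu>\<^sup>2)) / sqrt (1 - 2 * s * \<nu>\<^sup>2))"
    using gauss_mgf(2)[OF D] assms by (intro prod.cong) auto
  also have "\<dots> = exp (s * (\<Sum>p<P. (g p)\<^sup>2) / (1 - 2 * s * \<nu>\<^sup>2)) / sqrt (1 - 2 * s * \<nu>\<^sup>2) ^ P"
    by (simp add: prod_dividef exp_sum[symmetric] sum_distrib_left sum_divide_distrib)
  finally show "integral\<^sup>L M (\<lambda>x. exp (s * (\<Sum>p<P. (g p + v x p)\<^sup>2))) =
         exp (s * (\<Sum>p<P. (g p)\<^sup>2) / (1 - 2 * s * \<nu>\<^sup>2)) / sqrt (1 - 2 * s * \<nu>\<^sup>2) ^ P" .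
qed



lemma sqrt_pow_exp: "0 < k \<Longrightarrow> sqrt k ^ P = exp (real P * ln k / 2)"
proof -
  assume k: "0 < k"
  have "sqrt k = exp (ln k / 2)" using k by (simp add: exp_ln ln_sqrt[symmetric])
  then show ?thesis by (simp add: exp_of_nat_mult[symmetric] algebra_simps)
qed

lemma upper_key:
  fixes a b :: real assumes "1 \<le> b" "b \<le> a"
  shows "-((a-b)/(2*a)) * ((a\<^sup>2+1)/2) + ((a-b)/(2*a)) * ((b\<^sup>2-1)/2) * (a/b) + ((a/b) - (b/a))/4 = -(a-b)\<^sup>2/4"
  using assms by (simp add: field_simps power2_eq_square)

lemma upper_exp:
  fixes \<nu> \<tau>1 \<theta>0 \<theta>max :: real and P :: nat
  assumes "\<nu> > 0" "P \<ge> 1" "0 \<le> \<theta>0" "\<theta>0 \<le> \<theta>max" "\<tau>1 \<ge> \<nu>\<^sup>2 * (1 + \<theta>max)"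
  defines "a \<equiv> sqrt (2 * \<tau>1 / \<nu>\<^sup>2 - 1)" and "b \<equiv> sqrt (1 + 2 * \<theta>max)"
  defines "s \<equiv> ((a - b)/(2*a)) / \<nu>\<^sup>2"
  shows "0 \<le> s" "1 - 2 * s * \<nu>\<^sup>2 > 0"
    "exp (- s * (real P * \<tau>1)) * (exp (s * (real P * \<nu>\<^sup>2 * \<theta>0) / (1 - 2 * s * \<nu>\<^sup>2)) / sqrt (1 - 2 * s * \<nu>\<^sup>2) ^ P)
     \<le> exp (- (real P / 4) * (a - b)\<^sup>2)"
proof -
  have nu2: "\<nu>\<^sup>2 > 0" using assms by simp
  have b1: "1 \<le> b" unfolding b_def using assms by simp
  have "1 + 2 * \<theta>max \<le> 2 * \<tau>1 / \<nu>\<^sup>2 - 1"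
    using assms nu2 by (simp add: field_simps)
  then have ba: "b \<le> a" unfolding a_def b_def by (simp add: real_sqrt_le_iff)
  have a0: "a > 0" using b1 ba by simp
  have a2: "a\<^sup>2 = 2 * \<tau>1 / \<nu>\<^sup>2 - 1" unfolding a_def using b1 ba \<open>1 + 2 * \<theta>max \<le> _\<close> assms(3,4)
    by (intro real_sqrt_pow2) simp
  have b2: "b\<^sup>2 = 1 + 2 * \<theta>max" unfolding b_def using assms(3,4) by simp
  define \<mu> where "\<mu> = (a - b)/(2*a)"
  have smu: "s * \<nu>\<^sup>2 = \<mu>" unfolding s_def \<mu>_def using nu2 by simp
  have mu0: "0 \<le> \<mu>" unfolding \<mu>_def using ba a0 by simp
  have k: "1 - 2 * s * \<nu>\<^sup>2 = b / a" using smu a0 unfolding \<mu>_def by (simp add: field_simps)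
  show "0 \<le> s" unfolding s_def using ba a0 nu2 by simp
  show "1 - 2 * s * \<nu>\<^sup>2 > 0" unfolding k using a0 b1 by simp
  have t1: "\<tau>1 / \<nu>\<^sup>2 = (a\<^sup>2 + 1)/2" using a2 by simp
  have th: "\<theta>max = (b\<^sup>2 - 1)/2" using b2 by simp
  have lnr: "ln (a/b) \<le> ((a/b) - 1/(a/b))/2" using ln_upper_aux[of "a/b"] ba b1 by simp
  have lnk: "ln (b/a) = - ln (a/b)" using a0 b1 by (simp add: ln_div)
  have "- s * (real P * \<tau>1) + s * (real P * \<nu>\<^sup>2 * \<theta>0) / (b/a) - real P * ln (b/a) / 2
        = real P * (- \<mu> * (\<tau>1 / \<nu>\<^sup>2) + \<mu> * \<theta>0 * (a/b) + ln (a/b) / 2)"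
  proof -
    have sd: "s = \<mu> / \<nu>\<^sup>2" unfolding s_def \<mu>_def ..
    have 1: "s * (real P * \<tau>1) = real P * (\<mu> * (\<tau>1 / \<nu>\<^sup>2))" unfolding sd by (simp only: times_divide_eq_right times_divide_eq_left mult_ac)
    have 2: "s * (real P * \<nu>\<^sup>2 * \<theta>0) / (b/a) = real P * (\<mu> * \<theta>0 * (a/b))"
      unfolding sd using nu2 a0 b1 by (simp add: field_simps)
    have 3: "- s * (real P * \<tau>1) = - (real P * (\<mu> * (\<tau>1 / \<nu>\<^sup>2)))" using 1 by simp
    show ?thesis unfolding 3 2 lnk by (simp add: algebra_simps)
  qed
  also have "\<dots> \<le> real P * (- \<mu> * ((a\<^sup>2+1)/2) + \<mu> * ((b\<^sup>2-1)/2) * (a/b) + ((a/b) - (b/a))/4)"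
  proof (rule mult_left_mono)
    have "\<mu> * \<theta>0 * (a/b) \<le> \<mu> * \<theta>max * (a/b)"
      using mu0 a0 b1 assms(4) by (intro mult_right_mono mult_left_mono) auto
    moreover have "ln (a/b) / 2 \<le> ((a/b) - (b/a))/4" using lnr a0 b1 by simp
    ultimately show "- \<mu> * (\<tau>1 / \<nu>\<^sup>2) + \<mu> * \<theta>0 * (a/b) + ln (a/b) / 2
        \<le> - \<mu> * ((a\<^sup>2+1)/2) + \<mu> * ((b\<^sup>2-1)/2) * (a/b) + ((a/b) - (b/a))/4"
      unfolding t1 th by linarith
  qed simp
  also have "\<dots> = - (real P / 4) * (a - b)\<^sup>2"
    unfolding \<mu>_def upper_key[OF b1 ba] by simp
  finally have E: "- s * (real P * \<tau>1) + s * (real P * \<nu>\<^sup>2 * \<theta>0) / (b/a) - real P * ln (b/a) / 2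
     \<le> - (real P / 4) * (a - b)\<^sup>2" .
  have kpos: "b / a > 0" using a0 b1 by simp
  show "exp (- s * (real P * \<tau>1)) * (exp (s * (real P * \<nu>\<^sup>2 * \<theta>0) / (1 - 2 * s * \<nu>\<^sup>2)) / sqrt (1 - 2 * s * \<nu>\<^sup>2) ^ P)
     \<le> exp (- (real P / 4) * (a - b)\<^sup>2)"
  proof -
    have X: "exp (- s * (real P * \<tau>1)) * (exp (s * (real P * \<nu>\<^sup>2 * \<theta>0) / (b/a)) / exp (real P * ln (b/a) / 2))
      = exp (- s * (real P * \<tau>1) + s * (real P * \<nu>\<^sup>2 * \<theta>0) / (b/a) - real P * ln (b/a) / 2)"
      by (simp only: exp_diff exp_add times_divide_eq_right)
    show ?thesis unfolding k sqrt_pow_exp[OF kpos] X using E exp_le_cancel_iff by blast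
  qed
qed


lemma lower_exp:
  fixes \<nu> \<tau>2 \<theta>0 \<theta>min :: real and P :: nat
  assumes "\<nu> > 0" "0 \<le> \<theta>min" "\<theta>min \<le> \<theta>0" "\<tau>2 \<le> \<nu>\<^sup>2 * (1 + \<theta>min)"
  defines "c \<equiv> 1 + \<theta>min - \<tau>2 / \<nu>\<^sup>2" and "w \<equiv> 1 + 2 * \<theta>min"
  defines "s \<equiv> - (c / (2 * w)) / \<nu>\<^sup>2"
  shows "s \<le> 0" "1 - 2 * s * \<nu>\<^sup>2 > 0"
    "exp (- s * (real P * \<tau>2)) * (exp (s * (real P * \<nu>\<^sup>2 * \<theta>0) / (1 - 2 * s * \<nu>\<^sup>2)) / sqrt (1 - 2 * s * \<nu>\<^sup>2) ^ P)
     \<le> exp (- (real P / 4) * (c\<^sup>2 / w))"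
proof -
  have nu2: "\<nu>\<^sup>2 > 0" using assms by simp
  have w1: "1 \<le> w" unfolding w_def using assms by simp
  have c0: "0 \<le> c" unfolding c_def using assms nu2 by (simp add: field_simps)
  define u where "u = c / (2 * w)"
  have u0: "0 \<le> u" unfolding u_def using c0 w1 by simp
  have sd: "s = - u / \<nu>\<^sup>2" unfolding s_def u_def by simp
  have k: "1 - 2 * s * \<nu>\<^sup>2 = 1 + 2 * u" unfolding sd using nu2 by simp
  show "s \<le> 0" unfolding sd using u0 nu2 by simp
  show "1 - 2 * s * \<nu>\<^sup>2 > 0" unfolding k using u0 by simp
  have kpos: "1 + 2 * u > 0" using u0 by simp
  have lnk: "2 * u - 2 * u\<^sup>2 \<le> ln (1 + 2 * u)" using ln_lower_aux[of "2*u"] u0 by (simp add: power2_eq_square)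
  have t2: "\<tau>2 / \<nu>\<^sup>2 = 1 + \<theta>min - c" unfolding c_def by simp
  have frac: "u * \<theta>min - 2 * u\<^sup>2 * \<theta>min \<le> u * \<theta>0 / (1 + 2 * u)"
  proof -
    have "u * \<theta>min / (1 + 2 * u) \<le> u * \<theta>0 / (1 + 2 * u)"
      using u0 kpos assms(3) by (intro divide_right_mono mult_left_mono) auto
    moreover have "u * \<theta>min - 2 * u\<^sup>2 * \<theta>min \<le> u * \<theta>min / (1 + 2 * u)"
    proof -
      have "(u * \<theta>min - 2 * u\<^sup>2 * \<theta>min) * (1 + 2 * u) = u * \<theta>min - 4 * u^3 * \<theta>min"
        by (simp add: algebra_simps power2_eq_square power3_eq_cube)
      also have "\<dots> \<le> u * \<theta>min" using u0 assms(2) by simp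
      finally show ?thesis using kpos by (simp add: field_simps)
    qed
    ultimately show ?thesis by linarith
  qed
  have "- s * (real P * \<tau>2) + s * (real P * \<nu>\<^sup>2 * \<theta>0) / (1 + 2 * u) - real P * ln (1 + 2 * u) / 2
        = real P * (u * (\<tau>2 / \<nu>\<^sup>2) - u * \<theta>0 / (1 + 2 * u) - ln (1 + 2 * u) / 2)"
  proof -
    have 1: "- s * (real P * \<tau>2) = real P * (u * (\<tau>2 / \<nu>\<^sup>2))" unfolding sd by simp
    have 2: "s * (real P * \<nu>\<^sup>2 * \<theta>0) / (1 + 2 * u) = - (real P * (u * \<theta>0 / (1 + 2 * u)))"
      unfolding sd using nu2 by simp
    show ?thesis unfolding 1 2 by (simp add: algebra_simps)
  qed
  also have "\<dots> \<le> real P * (u * (1 + \<theta>min - c) - (u * \<theta>min - 2 * u\<^sup>2 * \<theta>min) - (u - u\<^sup>2))"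
    unfolding t2 using frac lnk by (intro mult_left_mono) auto
  also have "\<dots> = - (real P / 4) * (c\<^sup>2 / w)"
  proof -
    have "u * (1 + \<theta>min - c) - (u * \<theta>min - 2 * u\<^sup>2 * \<theta>min) - (u - u\<^sup>2) = - u * c + u\<^sup>2 * w"
      unfolding w_def by (simp add: algebra_simps)
    also have "\<dots> = - (c\<^sup>2 / w) / 4" unfolding u_def using w1 by (simp add: field_simps power2_eq_square)
    finally show ?thesis by simp
  qed
  finally have E: "- s * (real P * \<tau>2) + s * (real P * \<nu>\<^sup>2 * \<theta>0) / (1 + 2 * u) - real P * ln (1 + 2 * u) / 2
     \<le> - (real P / 4) * (c\<^sup>2 / w)" .
  show "exp (- s * (real P * \<tau>2)) * (exp (s * (real P * \<nu>\<^sup>2 * \<theta>0) / (1 - 2 * s * \<nu>\<^sup>2)) / sqrt (1 - 2 * s * \<nu>\<^sup>2) ^ P)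
     \<le> exp (- (real P / 4) * (c\<^sup>2 / w))"
  proof -
    have X: "exp (- s * (real P * \<tau>2)) * (exp (s * (real P * \<nu>\<^sup>2 * \<theta>0) / (1 + 2 * u)) / exp (real P * ln (1 + 2 * u) / 2))
      = exp (- s * (real P * \<tau>2) + s * (real P * \<nu>\<^sup>2 * \<theta>0) / (1 + 2 * u) - real P * ln (1 + 2 * u) / 2)"
      by (simp only: exp_diff exp_add times_divide_eq_right)
    show ?thesis unfolding k sqrt_pow_exp[OF kpos] X using E exp_le_cancel_iff by blast
  qed
qed



lemma chernoff:
  fixes S :: "'a \<Rightarrow> real"
  assumes "prob_space M" "A \<in> sets M" "integrable M (\<lambda>x. exp (s * S x))" "\<And>x. x \<in> A \<Longrightarrow> s * c \<le> s * S x"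
  shows "measure M A \<le> exp (- s * c) * integral\<^sup>L M (\<lambda>x. exp (s * S x))"
proof -
  have eq: "(\<lambda>x. exp (- s * c + s * S x)) = (\<lambda>x. exp (- s * c) * exp (s * S x))"
    by (rule ext) (rule exp_add)
  have "measure M A \<le> integral\<^sup>L M (\<lambda>x. exp (- s * c + s * S x))"
  proof (rule markov_exp[OF assms(1,2)])
    show "integrable M (\<lambda>x. exp (- s * c + s * S x))"
      unfolding eq using assms(3) by (rule integrable_mult_right)
    fix x assume "x \<in> A" then show "0 \<le> - s * c + s * S x" using assms(4) by force
  qed
  also have "\<dots> = exp (- s * c) * integral\<^sup>L M (\<lambda>x. exp (s * S x))"
    unfolding eq by simp
  finally show ?thesis .
qed

theorem corollary1:
  fixes M :: "'a measure" and v :: "'a \<Rightarrow> nat \<Rightarrow> real"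
    and g :: "nat \<Rightarrow> real" and P :: nat
    and \<nu> \<theta>min \<theta>max \<tau>1 \<tau>2 :: real
  assumes "prob_space M"
    and "P \<ge> 1" and "\<nu> > 0"
    and "prob_space.indep_vars M (\<lambda>_. borel) (\<lambda>p x. v x p) {..<P}"
    and "\<And>p. p < P \<Longrightarrow> distributed M lborel (\<lambda>x. v x p) (normal_density 0 \<nu>)"
    and "0 \<le> \<theta>min"
    and "\<theta>min \<le> (\<Sum>p<P. (g p)\<^sup>2) / (real P * \<nu>\<^sup>2)"
    and "(\<Sum>p<P. (g p)\<^sup>2) / (real P * \<nu>\<^sup>2) \<le> \<theta>max"
    and "\<tau>1 \<ge> \<nu>\<^sup>2 * (1 + \<theta>max)"
    and "\<tau>2 \<le> \<nu>\<^sup>2 * (1 + \<theta>min)"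
  shows "(measure M {x \<in> space M. (\<Sum>p<P. (g p + v x p)\<^sup>2) / real P \<ge> \<tau>1}
           \<le> exp (- (real P / 4) * (sqrt (2 * \<tau>1 / \<nu>\<^sup>2 - 1) - sqrt (1 + 2 * \<theta>max))\<^sup>2))
         \<and> (measure M {x \<in> space M. (\<Sum>p<P. (g p + v x p)\<^sup>2) / real P \<le> \<tau>2}
           \<le> exp (- (real P / 4) * ((1 + \<theta>min - \<tau>2 / \<nu>\<^sup>2)\<^sup>2 / (1 + 2 * \<theta>min))))"
proof -
  interpret prob_space M by fact
  define S where "S x = (\<Sum>p<P. (g p + v x p)\<^sup>2)" for x
  define \<theta>0 where "\<theta>0 = (\<Sum>p<P. (g p)\<^sup>2) / (real P * \<nu>\<^sup>2)"
  have P0: "real P > 0" using assms(2) by simp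
  have G: "(\<Sum>p<P. (g p)\<^sup>2) = real P * \<nu>\<^sup>2 * \<theta>0"
    unfolding \<theta>0_def using P0 assms(3) by simp
  have th0: "0 \<le> \<theta>0" unfolding \<theta>0_def by (intro divide_nonneg_nonneg sum_nonneg) auto
  have vm: "\<And>p. p < P \<Longrightarrow> (\<lambda>x. v x p) \<in> borel_measurable M"
    using assms(5) distributed_measurable by fastforce
  have Sm: "S \<in> borel_measurable M"
    unfolding S_def using vm by (intro borel_measurable_sum borel_measurable_power borel_measurable_add) auto
  have A1: "{x \<in> space M. S x / real P \<ge> \<tau>1} \<in> sets M" using Sm by measurable
  have A2: "{x \<in> space M. S x / real P \<le> \<tau>2} \<in> sets M" using Sm by measurable
  have mgf1: "integrable M (\<lambda>x. exp (s * S x))" if "1 - 2 * s * \<nu>\<^sup>2 > 0" for s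
    unfolding S_def by (rule mgf_sum(1)[OF assms(1) assms(4)]) (use assms that in auto)
  have mgf2: "integral\<^sup>L M (\<lambda>x. exp (s * S x)) = exp (s * (real P * \<nu>\<^sup>2 * \<theta>0) / (1 - 2 * s * \<nu>\<^sup>2)) / sqrt (1 - 2 * s * \<nu>\<^sup>2) ^ P"
    if "1 - 2 * s * \<nu>\<^sup>2 > 0" for s
    unfolding S_def G[symmetric] by (rule mgf_sum(2)[OF assms(1) assms(4)]) (use assms that in auto)
  have up: "measure M {x \<in> space M. S x / real P \<ge> \<tau>1}
           \<le> exp (- (real P / 4) * (sqrt (2 * \<tau>1 / \<nu>\<^sup>2 - 1) - sqrt (1 + 2 * \<theta>max))\<^sup>2)"
  proof -
    note U = upper_exp[OF assms(3) assms(2) th0 assms(8)[folded \<theta>0_def] assms(9)]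
    let ?s = "((sqrt (2 * \<tau>1 / \<nu>\<^sup>2 - 1) - sqrt (1 + 2 * \<theta>max)) / (2 * sqrt (2 * \<tau>1 / \<nu>\<^sup>2 - 1))) / \<nu>\<^sup>2"
    have "measure M {x \<in> space M. S x / real P \<ge> \<tau>1} \<le> exp (- ?s * (real P * \<tau>1)) * integral\<^sup>L M (\<lambda>x. exp (?s * S x))"
    proof (rule chernoff[OF assms(1) A1 mgf1[OF U(2)]])
      fix x assume "x \<in> {x \<in> space M. S x / real P \<ge> \<tau>1}"
      then have "real P * \<tau>1 \<le> S x" using P0 by (simp add: field_simps)
      then show "?s * (real P * \<tau>1) \<le> ?s * S x" using U(1) by (intro mult_left_mono) auto
    qed
    also have "\<dots> \<le> exp (- (real P / 4) * (sqrt (2 * \<tau>1 / \<nu>\<^sup>2 - 1) - sqrt (1 + 2 * \<theta>max))\<^sup>2)"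
      unfolding mgf2[OF U(2)] using U(3) .
    finally show ?thesis .
  qed
  have lo: "measure M {x \<in> space M. S x / real P \<le> \<tau>2}
           \<le> exp (- (real P / 4) * ((1 + \<theta>min - \<tau>2 / \<nu>\<^sup>2)\<^sup>2 / (1 + 2 * \<theta>min)))"
  proof -
    note L = lower_exp[OF assms(3) assms(6) assms(7)[folded \<theta>0_def] assms(10)]
    let ?s = "- ((1 + \<theta>min - \<tau>2 / \<nu>\<^sup>2) / (2 * (1 + 2 * \<theta>min))) / \<nu>\<^sup>2"
    have "measure M {x \<in> space M. S x / real P \<le> \<tau>2} \<le> exp (- ?s * (real P * \<tau>2)) * integral\<^sup>L M (\<lambda>x. exp (?s * S x))"
    proof (rule chernoff[OF assms(1) A2 mgf1[OF L(2)]])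
      fix x assume "x \<in> {x \<in> space M. S x / real P \<le> \<tau>2}"
      then have "S x \<le> real P * \<tau>2" using P0 by (simp add: field_simps)
      then show "?s * (real P * \<tau>2) \<le> ?s * S x" using L(1) by (intro mult_left_mono_neg) auto
    qed
    also have "\<dots> \<le> exp (- (real P / 4) * ((1 + \<theta>min - \<tau>2 / \<nu>\<^sup>2)\<^sup>2 / (1 + 2 * \<theta>min)))"
      unfolding mgf2[OF L(2)] using L(3) .
    finally show ?thesis .
  qed
  show ?thesis using up lo unfolding S_def by simp
qed

end
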